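(* Let $\Gamma$ and $A_k(q)$ be as below. For every prime $p\ge5$ and every positive integer $m$, $A_{54}(p^m)=\Gamma/\Gamma(p^m)$.
   Context: Here $\sqrt{2}i=\sqrt{-2}$ and $M_1=\begin{pmatrix}1&2\\-2&-3\end{pmatrix}$, $M_2=\begin{pmatrix}1-2\sqrt2 i&2\\2+4\sqrt2 i&-3+2\sqrt2 i\end{pmatrix}$, $M_3=\begin{pmatrix}1&0\\-4&1\end{pmatrix}$, $M_4=\begin{pmatrix}-1+2\sqrt2 i&-4\\-4\sqrt2 i&7-2\sqrt2 i\end{pmatrix}$, $M_5=\begin{pmatrix}-1&2\\2&-5\end{pmatrix}$, $M_6=\begin{pmatrix}1+2\sqrt2 i&-2\\-6-4\sqrt2 i&5-2\sqrt2 i\end{pmatrix}$, $M_7=\begin{pmatrix}-1-2\sqrt2 i&4\\4+4\sqrt2 i&-9+2\sqrt2 i\end{pmatrix}$. $\Gamma=\langle M_1,\dots,M_7\rangle\subset SL(2,\mathbb{Z}[\sqrt2 i])$; $\Gamma_{C_3}=\langle M_1,M_3,M_5\rangle$, $\Gamma_{C_1}=\langle M_2,M_3,M_6\rangle$, $\Gamma_{C_{3'}}=\langle M_7^{-1}M_3,M_7^{-1}M_5,M_7^{-1}M_6\rangle$. $\Gamma(q)$ is the set of $\gamma\in\Gamma$ with $\gamma\equiv I\pmod{q\mathbb{Z}[\sqrt2 i]}$, and $\Gamma/\Gamma(q)$ is identified with the image of $\Gamma$ in $SL(2,\mathbb{Z}[\sqrt2 i]/(q))$. For $k\ge1$, $A_k(q)$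 is the set of reductions modulo $q$ of all products $g_1h_1j_1\cdots g_kh_kj_k$ with $g_l\in\Gamma_{C_3}$, $h_l\in\Gamma_{C_1}$, $j_l\in\Gamma_{C_{3'}}$. *)

theory Defs
  imports Main "HOL-Computational_Algebra.Primes"
begin

text \<open>Elements of Z[sqrt(-2)]: the pair (a, b) stands for a + b * sqrt(-2).\<close>
type_synonym zs2 = "int \<times> int"

definition zadd :: "zs2 \<Rightarrow> zs2 \<Rightarrow> zs2" where
  "zadd x y = (fst x + fst y, snd x + snd y)"

definition zmul :: "zs2 \<Rightarrow> zs2 \<Rightarrow> zs2" where
  "zmul x y = (fst x * fst y - 2 * snd x * snd y, fst x * snd y + snd x * fst y)"

definition zneg :: "zs2 \<Rightarrow> zs2" where
  "zneg x = (- fst x, - snd x)"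

text \<open>Reduction modulo the ideal q Z[sqrt(-2)] (q a rational integer):
  a + b sqrt(-2) is in q Z[sqrt(-2)] iff q divides a and b, so canonical
  representatives are obtained componentwise.\<close>
definition zred :: "int \<Rightarrow> zs2 \<Rightarrow> zs2" where
  "zred q x = (fst x mod q, snd x mod q)"

datatype mat2 = Mat zs2 zs2 zs2 zs2

fun mmul :: "mat2 \<Rightarrow> mat2 \<Rightarrow> mat2" where
  "mmul (Mat a b c d) (Mat e f g h) =
     Mat (zadd (zmul a e) (zmul b g)) (zadd (zmul a f) (zmul b h))
         (zadd (zmul c e) (zmul d g)) (zadd (zmul c f) (zmul d h))"

text \<open>Inverse of a matrix of determinant 1 (all matrices considered lie in SL2).\<close>
fun minv :: "mat2 \<Rightarrow> mat2" where
  "minv (Mat a b c d) = Mat d (zneg b) (zneg c) a"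

definition mI :: mat2 where
  "mI = Mat (1, 0) (0, 0) (0, 0) (1, 0)"

fun mred :: "int \<Rightarrow> mat2 \<Rightarrow> mat2" where
  "mred q (Mat a b c d) = Mat (zred q a) (zred q b) (zred q c) (zred q d)"

inductive_set gen :: "mat2 set \<Rightarrow> mat2 set" for S :: "mat2 set" where
  gen_one: "mI \<in> gen S"
| gen_mul: "s \<in> S \<Longrightarrow> x \<in> gen S \<Longrightarrow> mmul s x \<in> gen S"
| gen_inv: "s \<in> S \<Longrightarrow> x \<in> gen S \<Longrightarrow> mmul (minv s) x \<in> gen S"

definition M1 :: mat2 where "M1 = Mat (1, 0) (2, 0) (-2, 0) (-3, 0)"
definition M2 :: mat2 where "M2 = Mat (1, -2) (2, 0) (2, 4) (-3, 2)"
definition M3 :: mat2 where "M3 = Mat (1, 0) (0, 0) (-4, 0) (1, 0)"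
definition M4 :: mat2 where "M4 = Mat (-1, 2) (-4, 0) (0, -4) (7, -2)"
definition M5 :: mat2 where "M5 = Mat (-1, 0) (2, 0) (2, 0) (-5, 0)"
definition M6 :: mat2 where "M6 = Mat (1, 2) (-2, 0) (-6, -4) (5, -2)"
definition M7 :: mat2 where "M7 = Mat (-1, -2) (4, 0) (4, 4) (-9, 2)"

definition Gamma :: "mat2 set" where
  "Gamma = gen {M1, M2, M3, M4, M5, M6, M7}"

definition Gamma_C3 :: "mat2 set" where
  "Gamma_C3 = gen {M1, M3, M5}"

definition Gamma_C1 :: "mat2 set" where
  "Gamma_C1 = gen {M2, M3, M6}"

definition Gamma_C3' :: "mat2 set" where
  "Gamma_C3' = gen {mmul (minv M7) M3, mmul (minv M7) M5, mmul (minv M7) M6}"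

fun blocks :: "nat \<Rightarrow> mat2 set" where
  "blocks 0 = {mI}"
| "blocks (Suc k) = {mmul (mmul (mmul g h) j) x | g h j x.
      g \<in> Gamma_C3 \<and> h \<in> Gamma_C1 \<and> j \<in> Gamma_C3' \<and> x \<in> blocks k}"

definition A :: "nat \<Rightarrow> int \<Rightarrow> mat2 set" where
  "A k q = mred q ` blocks k"

text \<open>Gamma / Gamma(q), identified with the image of Gamma modulo q.\<close>
definition Gamma_quot :: "int \<Rightarrow> mat2 set" where
  "Gamma_quot q = mred q ` Gamma"

end

theory Submission
  imports Defs
begin

datatype zz = ZZ int int

instantiation zz :: comm_ring_1
begin
fun plus_zz where "plus_zz (ZZ a b) (ZZ c d) = ZZ (a+c) (b+d)"
fun minus_zz where "minus_zz (ZZ a b) (ZZ c d) = ZZ (a-c) (b-d)"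
fun uminus_zz where "uminus_zz (ZZ a b) = ZZ (-a) (-b)"
fun times_zz where "times_zz (ZZ a b) (ZZ c d) = ZZ (a*c - 2*b*d) (a*d + b*c)"
definition zero_zz where "zero_zz = ZZ 0 0"
definition one_zz where "one_zz = ZZ 1 0"
instance
proof
  fix a b c :: zz
  show "a * b * c = a * (b * c)" by (cases a; cases b; cases c) (simp add: algebra_simps)
  show "a * b = b * a" by (cases a; cases b) (simp add: algebra_simps)
  show "1 * a = a" by (cases a) (simp add: one_zz_def)
  show "(a + b) * c = a * c + b * c" by (cases a; cases b; cases c) (simp add: algebra_simps)
  show "a + b + c = a + (b + c)" by (cases a; cases b; cases c) simp
  show "a + b = b + a" by (cases a; cases b) simp
  show "0 + a = a" by (cases a) (simp add: zero_zz_def)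
  show "- a + a = 0" by (cases a) (simp add: zero_zz_def)
  show "a - b = a + - b" by (cases a; cases b) simp
  show "(0::zz) \<noteq> 1" by (simp add: zero_zz_def one_zz_def)
qed
end

lemma of_int_zz: "(of_int k :: zz) = ZZ k 0"
proof (induction k rule: int_induct[where k=0])
  case base then show ?case by (simp add: zero_zz_def)
next
  case (step1 i) then show ?case by (simp add: one_zz_def)
next
  case (step2 i) then show ?case by (simp add: one_zz_def)
qed

definition toz :: "zs2 \<Rightarrow> zz" where "toz x = ZZ (fst x) (snd x)"

lemma toz_add: "toz (zadd x y) = toz x + toz y" by (simp add: toz_def zadd_def)
lemma toz_mul: "toz (zmul x y) = toz x * toz y" by (simp add: toz_def zmul_def)
lemma toz_neg: "toz (zneg x) = - toz x" by (simp add: toz_def zneg_def)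
lemma toz_inj: "toz x = toz y \<Longrightarrow> x = y" by (cases x; cases y) (simp add: toz_def)
lemma toz_one: "toz (1,0) = 1" by (simp add: toz_def one_zz_def)
lemma toz_zero: "toz (0,0) = 0" by (simp add: toz_def zero_zz_def)

datatype mz = MZ zz zz zz zz

fun mm :: "mz \<Rightarrow> mz \<Rightarrow> mz" where
  "mm (MZ a b c d) (MZ e f g h) = MZ (a*e+b*g) (a*f+b*h) (c*e+d*g) (c*f+d*h)"

fun madj :: "mz \<Rightarrow> mz" where "madj (MZ a b c d) = MZ d (-b) (-c) a"
fun mdet :: "mz \<Rightarrow> zz" where "mdet (MZ a b c d) = a*d - b*c"
definition mone :: mz where "mone = MZ 1 0 0 1"

fun phi :: "mat2 \<Rightarrow> mz" where "phi (Mat a b c d) = MZ (toz a) (toz b) (toz c) (toz d)"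

lemma phi_mmul: "phi (mmul X Y) = mm (phi X) (phi Y)"
  by (cases X; cases Y) (simp add: toz_add toz_mul)
lemma phi_minv: "phi (minv X) = madj (phi X)"
  by (cases X) (simp add: toz_neg)
lemma phi_mI: "phi mI = mone" by (simp add: mI_def mone_def toz_one toz_zero)
lemma phi_inj: "phi X = phi Y \<Longrightarrow> X = Y"
  by (cases X; cases Y) (auto dest: toz_inj)

lemma mm_assoc: "mm (mm X Y) Z = mm X (mm Y Z)"
  by (cases X; cases Y; cases Z) (simp add: algebra_simps)
lemma mm_one_left[simp]: "mm mone X = X" by (cases X) (simp add: mone_def)
lemma mm_one_right[simp]: "mm X mone = X" by (cases X) (simp add: mone_def)
lemma mdet_mm: "mdet (mm X Y) = mdet X * mdet Y"
  by (cases X; cases Y) (simp add: algebra_simps)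
lemma mdet_madj: "mdet (madj X) = mdet X" by (cases X) (simp add: algebra_simps)
lemma madj_left: "mdet X = 1 \<Longrightarrow> mm (madj X) X = mone"
  by (cases X) (simp add: mone_def algebra_simps)
lemma madj_right: "mdet X = 1 \<Longrightarrow> mm X (madj X) = mone"
  by (cases X) (simp add: mone_def algebra_simps)
lemma madj_mm: "madj (mm X Y) = mm (madj Y) (madj X)"
  by (cases X; cases Y) (simp add: algebra_simps)
lemma madj_madj[simp]: "madj (madj X) = X" by (cases X) simp
lemma madj_one[simp]: "madj mone = mone" by (simp add: mone_def)

lemma mmul_assoc: "mmul (mmul X Y) Z = mmul X (mmul Y Z)"
  by (rule phi_inj) (simp add: phi_mmul mm_assoc)
lemma mmul_I_left[simp]: "mmul mI X = X"
  by (rule phi_inj) (simp add: phi_mmul phi_mI)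
lemma mmul_I_right[simp]: "mmul X mI = X"
  by (rule phi_inj) (simp add: phi_mmul phi_mI)
lemma minv_mmul: "minv (mmul X Y) = mmul (minv Y) (minv X)"
  by (rule phi_inj) (simp add: phi_mmul phi_minv madj_mm)
lemma minv_minv[simp]: "minv (minv X) = X"
  by (rule phi_inj) (simp add: phi_minv)
lemma minv_I[simp]: "minv mI = mI"
  by (rule phi_inj) (simp add: phi_minv phi_mI)

lemma gen_closed: "x \<in> gen S \<Longrightarrow> y \<in> gen S \<Longrightarrow> mmul x y \<in> gen S"
  by (induction x rule: gen.induct) (auto simp: mmul_assoc intro: gen.intros)

lemma gen_base: "s \<in> S \<Longrightarrow> s \<in> gen S"
  using gen_mul[OF _ gen_one, of s S] by simp

lemma gen_base_inv: "s \<in> S \<Longrightarrow> minv s \<in> gen S"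
  using gen_inv[OF _ gen_one, of s S] by simp

lemma gen_minv: "x \<in> gen S \<Longrightarrow> minv x \<in> gen S"
proof (induction x rule: gen.induct)
  case gen_one then show ?case by (simp add: gen.gen_one)
next
  case (gen_mul s x) then show ?case
    by (simp add: minv_mmul gen_closed gen_base_inv)
next
  case (gen_inv s x) then show ?case
    by (simp add: minv_mmul gen_closed gen_base)
qed

lemma gen_sub: "S \<subseteq> gen T \<Longrightarrow> gen S \<subseteq> gen T"
proof
  fix x assume "S \<subseteq> gen T" "x \<in> gen S"
  then show "x \<in> gen T"
    by (induction rule: gen.induct[OF \<open>x \<in> gen S\<close>])
      (auto intro: gen.gen_one gen_closed gen_minv)
qed

lemma gen_det: "x \<in> gen S \<Longrightarrow> (\<And>s. s \<in> S \<Longrightarrow> mdet (phi s) = 1) \<Longrightarrow> mdet (phi x) = 1"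
  by (induction x rule: gen.induct) (auto simp: phi_mmul phi_minv mdet_mm mdet_madj phi_mI mone_def)

lemma gen_pow: "s \<in> gen S \<Longrightarrow> (mmul s ^^ n) mI \<in> gen S"
  by (induction n) (auto intro: gen.gen_one gen_closed)

lemma C3_sub: "Gamma_C3 \<subseteq> Gamma"
  unfolding Gamma_C3_def Gamma_def by (rule gen_sub) (auto intro: gen_base)
lemma C1_sub: "Gamma_C1 \<subseteq> Gamma"
  unfolding Gamma_C1_def Gamma_def by (rule gen_sub) (auto intro: gen_base)
lemma C3'_sub: "Gamma_C3' \<subseteq> Gamma"
proof -
  let ?T = "{M1, M2, M3, M4, M5, M6, M7}"
  have a: "minv M7 \<in> gen ?T" by (rule gen_base_inv) simp
  have "mmul (minv M7) M3 \<in> gen ?T" by (rule gen_closed[OF a gen_base]) simp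
  moreover have "mmul (minv M7) M5 \<in> gen ?T" by (rule gen_closed[OF a gen_base]) simp
  moreover have "mmul (minv M7) M6 \<in> gen ?T" by (rule gen_closed[OF a gen_base]) simp
  ultimately show ?thesis unfolding Gamma_C3'_def Gamma_def by (intro gen_sub) auto
qed

lemma Gamma_closed: "x \<in> Gamma \<Longrightarrow> y \<in> Gamma \<Longrightarrow> mmul x y \<in> Gamma"
  unfolding Gamma_def by (rule gen_closed)

lemma blocks_Gamma: "x \<in> blocks k \<Longrightarrow> x \<in> Gamma"
proof (induction k arbitrary: x)
  case 0 then show ?case by (simp add: Gamma_def gen.gen_one)
next
  case (Suc k) then show ?case
    using C3_sub C1_sub C3'_sub by (auto intro!: Gamma_closed)
qed

lemma A_sub: "A k q \<subseteq> Gamma_quot q"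
  unfolding A_def Gamma_quot_def using blocks_Gamma by auto

lemma I_C3: "mI \<in> Gamma_C3" by (simp add: Gamma_C3_def gen.gen_one)
lemma I_C1: "mI \<in> Gamma_C1" by (simp add: Gamma_C1_def gen.gen_one)
lemma I_C3': "mI \<in> Gamma_C3'" by (simp add: Gamma_C3'_def gen.gen_one)

lemma blocks_SucI: "g \<in> Gamma_C3 \<Longrightarrow> h \<in> Gamma_C1 \<Longrightarrow> j \<in> Gamma_C3' \<Longrightarrow> x \<in> blocks k
  \<Longrightarrow> mmul (mmul (mmul g h) j) x \<in> blocks (Suc k)"
  by simp blast

lemma blocks_Suc: "x \<in> blocks k \<Longrightarrow> x \<in> blocks (Suc k)"
  using blocks_SucI[OF I_C3 I_C1 I_C3', of x k] by simp

lemma blocks_mono: "a \<le> b \<Longrightarrow> x \<in> blocks a \<Longrightarrow> x \<in> blocks b"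
  by (induction b rule: dec_induct) (auto simp del: blocks.simps intro: blocks_Suc)

lemma blocks_mult: "x \<in> blocks a \<Longrightarrow> y \<in> blocks b \<Longrightarrow> mmul x y \<in> blocks (a+b)"
proof (induction a arbitrary: x)
  case 0 then show ?case by simp
next
  case (Suc a)
  then obtain g h j z where "x = mmul (mmul (mmul g h) j) z" "g \<in> Gamma_C3" "h \<in> Gamma_C1"
    "j \<in> Gamma_C3'" "z \<in> blocks a" by auto
  moreover have "mmul z y \<in> blocks (a+b)" using Suc calculation by blast
  ultimately have "mmul (mmul (mmul g h) j) (mmul z y) \<in> blocks (Suc (a+b))"
    using blocks_SucI by blast
  then show ?case using \<open>x = _\<close> by (simp only: mmul_assoc add_Suc)
qed

lemma C3_blocks: "g \<in> Gamma_C3 \<Longrightarrow> g \<in> blocks 1"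
  using blocks_SucI[OF _ I_C1 I_C3', of g mI 0] by simp
lemma C1_blocks: "g \<in> Gamma_C1 \<Longrightarrow> g \<in> blocks 1"
  using blocks_SucI[OF I_C3 _ I_C3', of g mI 0] by simp

definition cc :: "int \<Rightarrow> zz \<Rightarrow> zz \<Rightarrow> bool" where
  "cc q x y \<longleftrightarrow> (\<exists>k. x = y + of_int q * k)"

lemma cc_refl[simp]: "cc q x x" unfolding cc_def by (auto intro: exI[of _ 0])
lemma cc_sym: "cc q x y \<Longrightarrow> cc q y x"
proof -
  assume "cc q x y" then obtain k where "x = y + of_int q * k" unfolding cc_def by auto
  then show ?thesis unfolding cc_def by (auto intro!: exI[of _ "- k"] simp: algebra_simps)
qed
lemma cc_trans: "cc q x y \<Longrightarrow> cc q y z \<Longrightarrow> cc q x z"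
proof -
  assume "cc q x y" "cc q y z"
  then obtain k l where "x = y + of_int q * k" "y = z + of_int q * l" unfolding cc_def by auto
  then show ?thesis unfolding cc_def by (auto intro!: exI[of _ "k + l"] simp: algebra_simps)
qed
lemma cc_add: "cc q x y \<Longrightarrow> cc q x' y' \<Longrightarrow> cc q (x + x') (y + y')"
proof -
  assume "cc q x y" "cc q x' y'"
  then obtain k l where "x = y + of_int q * k" "x' = y' + of_int q * l" unfolding cc_def by auto
  then show ?thesis unfolding cc_def by (auto intro!: exI[of _ "k + l"] simp: algebra_simps)
qed
lemma cc_diff: "cc q x y \<Longrightarrow> cc q x' y' \<Longrightarrow> cc q (x - x') (y - y')"
proof -
  assume "cc q x y" "cc q x' y'"
  then obtain k l where "x = y + of_int q * k" "x' = y' + of_int q * l" unfolding cc_def by auto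
  then show ?thesis unfolding cc_def by (auto intro!: exI[of _ "k - l"] simp: algebra_simps)
qed
lemma cc_minus: "cc q x y \<Longrightarrow> cc q (- x) (- y)"
proof -
  assume "cc q x y" then obtain k where "x = y + of_int q * k" unfolding cc_def by auto
  then show ?thesis unfolding cc_def by (auto intro!: exI[of _ "- k"] simp: algebra_simps)
qed
lemma cc_mult: "cc q x y \<Longrightarrow> cc q x' y' \<Longrightarrow> cc q (x * x') (y * y')"
proof -
  assume "cc q x y" "cc q x' y'"
  then obtain k l where "x = y + of_int q * k" "x' = y' + of_int q * l" unfolding cc_def by auto
  then show ?thesis unfolding cc_def
    by (auto intro!: exI[of _ "y * l + k * y' + of_int q * k * l"] simp: algebra_simps)
qed
lemma cc_int: "a mod q = b mod q \<Longrightarrow> cc q (of_int a) (of_int b)"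
proof -
  assume "a mod q = b mod q"
  then have "q dvd (a - b)" by (simp add: mod_eq_dvd_iff)
  then obtain k where "a = b + q * k" by (auto simp: dvd_def algebra_simps)
  then show ?thesis unfolding cc_def by (auto intro!: exI[of _ "of_int k"])
qed

fun mc :: "int \<Rightarrow> mz \<Rightarrow> mz \<Rightarrow> bool" where
  "mc q (MZ a b c d) (MZ a' b' c' d') \<longleftrightarrow> cc q a a' \<and> cc q b b' \<and> cc q c c' \<and> cc q d d'"

lemma mc_refl[simp]: "mc q X X" by (cases X) simp
lemma mc_sym: "mc q X Y \<Longrightarrow> mc q Y X" by (cases X; cases Y) (auto intro: cc_sym)
lemma mc_trans: "mc q X Y \<Longrightarrow> mc q Y Z \<Longrightarrow> mc q X Z"
  by (cases X; cases Y; cases Z) (auto intro: cc_trans)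
lemma mc_mm: "mc q X Y \<Longrightarrow> mc q X' Y' \<Longrightarrow> mc q (mm X X') (mm Y Y')"
  by (cases X; cases Y; cases X'; cases Y') (auto intro!: cc_add cc_mult)

lemma zred_cc: "cc q (toz x) (toz y) \<Longrightarrow> zred q x = zred q y"
proof -
  assume "cc q (toz x) (toz y)"
  then obtain k where k: "toz x = toz y + of_int q * k" unfolding cc_def by auto
  obtain k0 k1 where "k = ZZ k0 k1" by (cases k)
  with k have "fst x = fst y + q * k0" "snd x = snd y + q * k1"
    by (cases x; cases y; simp add: toz_def of_int_zz)+
  then show ?thesis by (simp add: zred_def)
qed

lemma mred_mc: "mc q (phi X) (phi Y) \<Longrightarrow> mred q X = mred q Y"
  by (cases X; cases Y) (simp add: zred_cc)

definition BB :: "int \<Rightarrow> nat \<Rightarrow> mz set" where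
  "BB q k = {X. \<exists>B\<in>blocks k. mc q X (phi B)}"

lemma BB_mult: "X \<in> BB q a \<Longrightarrow> Y \<in> BB q b \<Longrightarrow> mm X Y \<in> BB q (a+b)"
  unfolding BB_def by (auto intro!: bexI[OF _ blocks_mult] simp: phi_mmul intro: mc_mm)
lemma BB_mono: "a \<le> b \<Longrightarrow> X \<in> BB q a \<Longrightarrow> X \<in> BB q b"
  unfolding BB_def using blocks_mono by blast
lemma BB_cong: "mc q X Y \<Longrightarrow> Y \<in> BB q k \<Longrightarrow> X \<in> BB q k"
  unfolding BB_def using mc_trans by blast

definition G1 :: "int \<Rightarrow> mz set" where "G1 q = {X. \<exists>g\<in>Gamma_C3. mc q X (phi g)}"
definition G2 :: "int \<Rightarrow> mz set" where "G2 q = {X. \<exists>g\<in>Gamma_C1. mc q X (phi g)}"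

lemma G1_BB: "X \<in> G1 q \<Longrightarrow> X \<in> BB q 1"
  unfolding G1_def BB_def using C3_blocks by blast
lemma G2_BB: "X \<in> G2 q \<Longrightarrow> X \<in> BB q 1"
  unfolding G2_def BB_def using C1_blocks by blast

lemma G1_mm: "X \<in> G1 q \<Longrightarrow> Y \<in> G1 q \<Longrightarrow> mm X Y \<in> G1 q"
  unfolding G1_def Gamma_C3_def by (auto intro!: bexI[OF _ gen_closed] simp: phi_mmul intro: mc_mm)
lemma G2_mm: "X \<in> G2 q \<Longrightarrow> Y \<in> G2 q \<Longrightarrow> mm X Y \<in> G2 q"
  unfolding G2_def Gamma_C1_def by (auto intro!: bexI[OF _ gen_closed] simp: phi_mmul intro: mc_mm)
lemma G1_cong: "mc q X Y \<Longrightarrow> Y \<in> G1 q \<Longrightarrow> X \<in> G1 q"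
  unfolding G1_def using mc_trans by blast
lemma G2_cong: "mc q X Y \<Longrightarrow> Y \<in> G2 q \<Longrightarrow> X \<in> G2 q"
  unfolding G2_def using mc_trans by blast

lemma final_step:
  assumes "\<And>G. G \<in> Gamma \<Longrightarrow> phi G \<in> BB q 54"
  shows "A 54 q = Gamma_quot q"
proof
  show "A 54 q \<subseteq> Gamma_quot q" by (rule A_sub)
  show "Gamma_quot q \<subseteq> A 54 q"
  proof
    fix Y assume "Y \<in> Gamma_quot q"
    then obtain G where G: "G \<in> Gamma" "Y = mred q G" unfolding Gamma_quot_def by auto
    then obtain B where "B \<in> blocks 54" "mc q (phi G) (phi B)" using assms unfolding BB_def by blast
    then show "Y \<in> A 54 q" using G mred_mc unfolding A_def by auto
  qed
qed

definition Ue :: "zz \<Rightarrow> mz" where "Ue x = MZ 1 x 0 1"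
definition Le :: "zz \<Rightarrow> mz" where "Le x = MZ 1 0 x 1"
definition Dg :: "zz \<Rightarrow> zz \<Rightarrow> mz" where "Dg x y = MZ x 0 0 y"
definition sq :: zz where "sq = ZZ 0 1"
definition cf :: "mz \<Rightarrow> mz" where "cf X = mm (mm (Le sq) X) (Le (- sq))"

lemma Ue_mm: "mm (Ue x) (Ue y) = Ue (x + y)" by (simp add: Ue_def algebra_simps)
lemma Le_mm: "mm (Le x) (Le y) = Le (x + y)" by (simp add: Le_def algebra_simps)
lemma Ue_pow: "(mm (Ue x) ^^ n) mone = Ue (of_nat n * x)"
  by (induction n) (auto simp: Ue_def mone_def algebra_simps)
lemma Le_pow: "(mm (Le x) ^^ n) mone = Le (of_nat n * x)"
  by (induction n) (auto simp: Le_def mone_def algebra_simps)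
lemma phi_pow: "phi ((mmul s ^^ n) mI) = (mm (phi s) ^^ n) mone"
  by (induction n) (auto simp: phi_mmul phi_mI)

lemma Le_sq_inv: "mm (Le (- sq)) (Le sq) = mone" "mm (Le sq) (Le (- sq)) = mone"
  by (simp_all add: Le_mm mone_def Le_def)

lemma cf_mm: "cf (mm X Y) = mm (cf X) (cf Y)"
proof -
  have "mm (cf X) (cf Y) = mm (mm (Le sq) X) (mm (mm (Le (- sq)) (Le sq)) (mm Y (Le (- sq))))"
    unfolding cf_def by (simp only: mm_assoc)
  also have "\<dots> = cf (mm X Y)" unfolding cf_def Le_sq_inv by (simp add: mm_assoc)
  finally show ?thesis by simp
qed
lemma cf_one: "cf mone = mone" by (simp add: cf_def Le_sq_inv)
lemma cf_pow: "cf ((mm X ^^ n) mone) = (mm (cf X) ^^ n) mone"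
  by (induction n) (auto simp: cf_one cf_mm)
lemma cf_Le: "cf (Le x) = Le x"
  by (simp add: cf_def Le_mm add.commute)
lemma cf_mc: "mc q X Y \<Longrightarrow> mc q (cf X) (cf Y)"
  unfolding cf_def by (intro mc_mm) auto

lemma mc_Ue: "cc q x y \<Longrightarrow> mc q (Ue x) (Ue y)" by (simp add: Ue_def)
lemma mc_Le: "cc q x y \<Longrightarrow> mc q (Le x) (Le y)" by (simp add: Le_def)

lemma zz_num: "(numeral n :: zz) = ZZ (numeral n) 0"
  using of_int_zz[of "numeral n"] by simp
lemma zz_neg_num: "(- numeral n :: zz) = ZZ (- numeral n) 0"
  using of_int_zz[of "- numeral n"] by simp

lemma phi_U8: "phi (mmul (minv M5) (mmul M1 (mmul (minv M5) M1))) = Ue 8"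
  by (simp add: zadd_def zmul_def zneg_def M1_def M5_def Ue_def toz_def zz_num one_zz_def zero_zz_def)
lemma phi_M3: "phi M3 = Le (-4)"
  by (simp add: M3_def Le_def toz_def zz_neg_num one_zz_def zero_zz_def)
lemma cf_U8: "cf (Ue 8) = MZ (ZZ 1 (-8)) (ZZ 8 0) (ZZ 16 0) (ZZ 1 8)"
  by (simp add: cf_def Le_def Ue_def sq_def zz_num one_zz_def zero_zz_def)
lemma phi_Y8: "phi (mmul (minv M6) (mmul M2 (mmul (minv M6) M2))) = cf (Ue 8)"
  unfolding cf_U8 by (simp add: zadd_def zmul_def zneg_def M2_def M6_def toz_def)

lemma inv_exists:
  assumes "coprime a q" shows "\<exists>b. cc q (of_int a * of_int b) 1"
proof -
  obtain u v where "u * a + v * q = gcd a q" using bezout_int by blast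
  with assms have "a * u = 1 + q * (- v)" by (simp add: algebra_simps)
  then have "of_int a * of_int u = (1::zz) + of_int q * of_int (- v)"
    by (metis of_int_1 of_int_add of_int_mult)
  then show ?thesis unfolding cc_def by blast
qed

lemma nat_multiple:
  assumes "q > 0" "cc q (of_int c * of_int b) 1"
  shows "\<exists>n::nat. cc q (of_nat n * of_int c) (of_int t)"
proof -
  define r where "r = (t * b) mod q"
  have r0: "r \<ge> 0" using assms by (simp add: r_def)
  have "cc q (of_int r) (of_int (t * b))" unfolding r_def by (rule cc_int) simp
  then have h1: "cc q (of_int r * of_int c) (of_int (t * b) * of_int c)"
    by (rule cc_mult) simp
  have e: "(of_int (t * b) * of_int c :: zz) = of_int t * (of_int c * of_int b)"
    by (simp add: algebra_simps)
  have h3: "cc q (of_int t * (of_int c * of_int b)) (of_int t * 1)"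
    by (rule cc_mult[OF cc_refl assms(2)])
  have "cc q (of_int r * of_int c) (of_int t)"
    using cc_trans[OF h1[unfolded e] h3] by simp
  moreover have "(of_nat (nat r) :: zz) = of_int r" using r0 by simp
  ultimately have "cc q (of_nat (nat r) * of_int c) (of_int t)" by simp
  then show ?thesis by blast
qed

lemma cop8: "coprime 2 q \<Longrightarrow> coprime (8::int) q"
proof -
  assume "coprime 2 q"
  then have "coprime ((2::int)^3) q" by (simp only: coprime_power_left_iff) simp
  then show ?thesis by simp
qed
lemma copm4: "coprime 2 q \<Longrightarrow> coprime (-4::int) q"
proof -
  assume "coprime 2 q"
  then have "coprime ((2::int)^2) q" by (simp only: coprime_power_left_iff) simp
  then show ?thesis by simp
qed

lemma pow_gen: "s \<in> gen S \<Longrightarrow> phi s = X \<Longrightarrow> \<exists>g\<in>gen S. phi g = (mm X ^^ n) mone"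
  using gen_pow[of s S n] phi_pow[of n s] by blast

lemma multiple_mem:
  assumes q: "q > 0" and cop: "coprime c q" and s: "s \<in> gen S"
    and ph: "phi s = F (of_int c)"
    and Fpow: "\<And>x n. (mm (F x) ^^ n) mone = F (of_nat n * x)"
    and Fcong: "\<And>x y. cc q x y \<Longrightarrow> mc q (F x) (F y)"
  shows "\<exists>g\<in>gen S. mc q (F (of_int t)) (phi g)"
proof -
  obtain b where "cc q (of_int c * of_int b) 1" using inv_exists[OF cop] by blast
  then obtain n where n: "cc q (of_nat n * of_int c) (of_int t)" using nat_multiple q by blast
  obtain g where "g \<in> gen S" "phi g = (mm (F (of_int c)) ^^ n) mone" using pow_gen[OF s ph] by blast
  moreover have "mc q (F (of_int t)) (F (of_nat n * of_int c))" by (rule Fcong) (rule cc_sym[OF n])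
  ultimately show ?thesis using Fpow by metis
qed

lemma U_G1: assumes "q > 0" "coprime 2 q" shows "Ue (of_int t) \<in> G1 q"
proof -
  let ?w = "mmul (minv M5) (mmul M1 (mmul (minv M5) M1))"
  have "?w \<in> gen {M1, M3, M5}" by (intro gen_closed gen_base gen_base_inv) auto
  moreover have "phi ?w = Ue (of_int 8)" using phi_U8 by simp
  ultimately show ?thesis unfolding G1_def Gamma_C3_def
    using multiple_mem[OF assms(1) cop8[OF assms(2)], of ?w _ Ue, OF _ _ Ue_pow mc_Ue] by blast
qed

lemma L_G1: assumes "q > 0" "coprime 2 q" shows "Le (of_int t) \<in> G1 q"
proof -
  have "M3 \<in> gen {M1, M3, M5}" by (intro gen_base) auto
  moreover have "phi M3 = Le (of_int (-4))" using phi_M3 by simp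
  ultimately show ?thesis unfolding G1_def Gamma_C3_def
    using multiple_mem[OF assms(1) copm4[OF assms(2)], of M3 _ Le, OF _ _ Le_pow mc_Le] by blast
qed

lemma L_G2: assumes "q > 0" "coprime 2 q" shows "Le (of_int t) \<in> G2 q"
proof -
  have "M3 \<in> gen {M2, M3, M6}" by (intro gen_base) auto
  moreover have "phi M3 = Le (of_int (-4))" using phi_M3 by simp
  ultimately show ?thesis unfolding G2_def Gamma_C1_def
    using multiple_mem[OF assms(1) copm4[OF assms(2)], of M3 _ Le, OF _ _ Le_pow mc_Le] by blast
qed

lemma cfU_G2: assumes "q > 0" "coprime 2 q" shows "cf (Ue (of_int t)) \<in> G2 q"
proof -
  let ?w = "mmul (minv M6) (mmul M2 (mmul (minv M6) M2))"
  have "?w \<in> gen {M2, M3, M6}" by (intro gen_closed gen_base gen_base_inv) auto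
  moreover have "phi ?w = cf (Ue (of_int 8))" using phi_Y8 by simp
  moreover have "\<And>x n. (mm (cf (Ue x)) ^^ n) mone = cf (Ue (of_nat n * x))"
    by (simp add: cf_pow[symmetric] Ue_pow)
  moreover have "\<And>x y. cc q x y \<Longrightarrow> mc q (cf (Ue x)) (cf (Ue y))"
    by (intro cf_mc mc_Ue)
  ultimately show ?thesis unfolding G2_def Gamma_C1_def
    using multiple_mem[OF assms(1) cop8[OF assms(2)], of ?w _ "\<lambda>x. cf (Ue x)"] by blast
qed

lemma cfL_G2: assumes "q > 0" "coprime 2 q" shows "cf (Le (of_int t)) \<in> G2 q"
  using L_G2[OF assms] by (simp add: cf_Le)

definition wmat :: "zz \<Rightarrow> zz \<Rightarrow> mz" where
  "wmat u ui = mm (mm (Ue u) (Le (- ui))) (Ue u)"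
definition W1 :: mz where "W1 = mm (mm (Ue (-1)) (Le 1)) (Ue (-1))"

lemma W1_eq: "W1 = MZ 0 (-1) 1 0" by (simp add: W1_def Ue_def Le_def)

lemma wW1_eq: "mm (wmat u ui) W1 = MZ (u * (2 - u * ui)) (- (1 - u * ui)) (1 - u * ui) ui"
  by (simp add: wmat_def W1_eq Ue_def Le_def algebra_simps)

lemma cc_rel: "cc q (u * ui) 1 \<Longrightarrow> cc q (1 - u * ui) 0"
  using cc_diff[OF cc_refl, of q "u*ui" 1 1] by simp

lemma diag_mc:
  assumes "cc q (u * ui) 1" shows "mc q (Dg u ui) (mm (wmat u ui) W1)"
proof -
  have e: "cc q (1 - u * ui) 0" by (rule cc_rel[OF assms])
  have "cc q (2 - u * ui) (2 - 1)" by (rule cc_diff[OF cc_refl assms])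
  then have "cc q (u * (2 - u * ui)) (u * 1)" by (intro cc_mult) simp_all
  then have a: "cc q u (u * (2 - u * ui))" by (simp add: cc_sym)
  have b: "cc q 0 (- (1 - u * ui))" using cc_minus[OF e] by (simp add: cc_sym)
  show ?thesis unfolding wW1_eq using a b e by (simp add: Dg_def cc_sym)
qed

lemma G1_U: "q > 0 \<Longrightarrow> coprime 2 q \<Longrightarrow> Ue (of_int t) \<in> G1 q" by (rule U_G1)

lemma Ue_neg_int: "Ue (- of_int t) = Ue (of_int (- t))" by simp
lemma Le_neg_int: "Le (- of_int t) = Le (of_int (- t))" by simp

lemma W1_G1: assumes "q > 0" "coprime 2 q" shows "W1 \<in> G1 q"
proof -
  have "Ue (-1) \<in> G1 q" using U_G1[OF assms, of "-1"] by simp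
  moreover have "Le 1 \<in> G1 q" using L_G1[OF assms, of 1] by simp
  ultimately show ?thesis unfolding W1_def by (intro G1_mm)
qed

lemma cfW1_G2: assumes "q > 0" "coprime 2 q" shows "cf W1 \<in> G2 q"
proof -
  have "cf (Ue (-1)) \<in> G2 q" using cfU_G2[OF assms, of "-1"] by simp
  moreover have "cf (Le 1) \<in> G2 q" using cfL_G2[OF assms, of 1] by simp
  ultimately show ?thesis unfolding W1_def cf_mm by (intro G2_mm)
qed

lemma Dg_G1:
  assumes "q > 0" "coprime 2 q" "cc q (of_int a * of_int b) 1"
  shows "Dg (of_int a) (of_int b) \<in> G1 q"
proof -
  have "Le (- of_int b) \<in> G1 q" using L_G1[OF assms(1,2), of "-b"] by simp
  then have "wmat (of_int a) (of_int b) \<in> G1 q" using U_G1[OF assms(1,2)] unfolding wmat_def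
    by (intro G1_mm)
  then have "mm (wmat (of_int a) (of_int b)) W1 \<in> G1 q" using W1_G1[OF assms(1,2)] by (simp add: G1_mm)
  then show ?thesis using diag_mc[OF assms(3)] G1_cong by blast
qed

lemma cfDg_G2:
  assumes "q > 0" "coprime 2 q" "cc q (of_int a * of_int b) 1"
  shows "cf (Dg (of_int a) (of_int b)) \<in> G2 q"
proof -
  have "cf (Le (- of_int b)) \<in> G2 q" using cfL_G2[OF assms(1,2), of "-b"] by simp
  then have "cf (wmat (of_int a) (of_int b)) \<in> G2 q" using cfU_G2[OF assms(1,2)] unfolding wmat_def cf_mm
    by (intro G2_mm)
  then have "cf (mm (wmat (of_int a) (of_int b)) W1) \<in> G2 q" using cfW1_G2[OF assms(1,2)]
    by (simp add: G2_mm cf_mm)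
  then show ?thesis using cf_mc[OF diag_mc[OF assms(3)]] G2_cong by blast
qed

lemma cf_Dg: "cf (Dg x y) = MZ x 0 (sq * (x - y)) y"
  by (simp add: cf_def Dg_def Le_def algebra_simps)

lemma comm_eq:
  "mm (mm (Dg a' a) (cf (Dg (b' * a) (b * a')))) (Dg (b * a' * a) (b' * a * a')) =
   MZ ((a * a') * (a * a') * (b * b')) 0 (sq * ((a * a') * (b * b') * a * a - (a * a') * (a * a') * b * b)) ((a * a') * (a * a') * (b * b'))"
  by (simp only: cf_Dg) (simp add: Dg_def algebra_simps)

lemma comm_mc:
  assumes "cc q (a * a') 1" "cc q (b * b') 1"
  shows "mc q (Le (sq * (a * a - b * b)))
     (mm (mm (Dg a' a) (cf (Dg (b' * a) (b * a')))) (Dg (b * a' * a) (b' * a * a')))"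
proof -
  have e: "cc q ((a * a') * (a * a') * (b * b')) (1 * 1 * 1)"
    by (intro cc_mult assms)
  have f: "cc q ((a * a') * (b * b') * a * a - (a * a') * (a * a') * b * b)
                (1 * 1 * a * a - 1 * 1 * b * b)"
    by (intro cc_mult cc_diff assms cc_refl)
  show ?thesis unfolding comm_eq Le_def using e f
    by (simp add: cc_sym cc_mult)
qed

lemma cc_int_dvd: "cc q (of_int x) (of_int y) \<Longrightarrow> q dvd (x - y)"
proof -
  assume "cc q (of_int x) (of_int y)"
  then obtain k where k: "(of_int x :: zz) = of_int y + of_int q * k" unfolding cc_def by auto
  obtain k0 k1 where "k = ZZ k0 k1" by (cases k)
  with k have "x = y + q * k0" by (simp add: of_int_zz)
  then show ?thesis by simp
qed

locale pset =
  fixes p q :: int and m :: nat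
  assumes pr: "prime p" and p5: "p \<ge> 5" and qdef: "q = p ^ m" and m1: "m \<ge> 1"
begin

lemma q_pos: "q > 0" using qdef p5 by simp

lemma ndvd_cop: "\<not> p dvd x \<Longrightarrow> coprime x q"
  using prime_imp_power_coprime[OF pr] qdef by simp

lemma p_dvd_q: "p dvd q" using qdef m1 by (simp add: dvd_power)

lemma p_ndvd_small: "\<not> p dvd 1" "\<not> p dvd 2" "\<not> p dvd 3"
proof -
  show "\<not> p dvd 1" using p5 zdvd_imp_le[of p 1] by auto
  show "\<not> p dvd 2" using p5 zdvd_imp_le[of p 2] by auto
  show "\<not> p dvd 3" using p5 zdvd_imp_le[of p 3] by auto
qed

lemma cop2: "coprime 2 q" using ndvd_cop p_ndvd_small(2) by blast

lemma cc_p: "cc q (of_int x) (of_int y) \<Longrightarrow> p dvd (x - y)"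
  using cc_int_dvd p_dvd_q dvd_trans by blast

lemma inv_ndvd:
  assumes "\<not> p dvd a" obtains b where "cc q (of_int a * of_int b) 1" "\<not> p dvd b"
proof -
  obtain b where b: "cc q (of_int a * of_int b) 1" using inv_exists[OF ndvd_cop[OF assms]] by blast
  have "p dvd (a * b - 1)" using cc_p[of "a*b" 1] b by simp
  then have "\<not> p dvd b" using p_ndvd_small(1)
    by (metis dvd_diff dvd_mult eq_iff_diff_eq_0 diff_diff_eq2 diff_zero)
  with b that show ?thesis by blast
qed

lemma Ls_basic:
  assumes "\<not> p dvd a" "\<not> p dvd b"
  shows "Le (sq * (of_int a * of_int a - of_int b * of_int b)) \<in> BB q 3"
proof -
  obtain a' where a': "cc q (of_int a * of_int a') 1" using inv_ndvd[OF assms(1)] by blast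
  obtain b' where b': "cc q (of_int b * of_int b') 1" using inv_ndvd[OF assms(2)] by blast
  have X: "Dg (of_int a') (of_int a) \<in> G1 q"
    by (rule Dg_G1[OF q_pos cop2]) (use a' in \<open>simp add: mult.commute\<close>)
  have "cc q ((of_int a * of_int a') * (of_int b * of_int b')) (1 * 1)" by (intro cc_mult a' b')
  then have "cc q (of_int (b' * a) * of_int (b * a')) 1" by (simp add: algebra_simps)
  then have Y: "cf (Dg (of_int (b' * a)) (of_int (b * a'))) \<in> G2 q"
    by (rule cfDg_G2[OF q_pos cop2])
  have "cc q ((of_int a * of_int a') * (of_int a * of_int a') * (of_int b * of_int b')) (1 * 1 * 1)"
    by (intro cc_mult a' b')
  then have "cc q (of_int (b * a' * a) * of_int (b' * a * a')) 1" by (simp add: algebra_simps)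
  then have Z: "Dg (of_int (b * a' * a)) (of_int (b' * a * a')) \<in> G1 q"
    by (rule Dg_G1[OF q_pos cop2])
  have "mm (mm (Dg (of_int a') (of_int a)) (cf (Dg (of_int (b' * a)) (of_int (b * a')))))
          (Dg (of_int (b * a' * a)) (of_int (b' * a * a'))) \<in> BB q (1 + 1 + 1)"
    by (intro BB_mult G1_BB G2_BB X Y Z)
  then have "mm (mm (Dg (of_int a') (of_int a)) (cf (Dg (of_int (b' * a)) (of_int (b * a')))))
          (Dg (of_int (b * a' * a)) (of_int (b' * a * a'))) \<in> BB q 3" by (simp add: numeral_3_eq_3)
  moreover have "mc q (Le (sq * (of_int a * of_int a - of_int b * of_int b)))
      (mm (mm (Dg (of_int a') (of_int a)) (cf (Dg (of_int (b' * a)) (of_int (b * a')))))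
          (Dg (of_int (b * a' * a)) (of_int (b' * a * a'))))"
    using comm_mc[OF a' b'] by simp
  ultimately show ?thesis by (rule BB_cong[rotated])
qed

lemma Ls_good:
  assumes "\<not> p dvd (k + 1)" "\<not> p dvd (k - 1)"
  shows "Le (sq * of_int k) \<in> BB q 3"
proof -
  obtain h where h: "cc q (of_int 2 * of_int h) 1" "\<not> p dvd h" using inv_ndvd[OF p_ndvd_small(2)] by blast
  have a: "\<not> p dvd ((k + 1) * h)" using assms h(2) prime_dvd_mult_iff[OF pr] by blast
  have b: "\<not> p dvd ((k - 1) * h)" using assms h(2) prime_dvd_mult_iff[OF pr] by blast
  have B: "Le (sq * (of_int ((k + 1) * h) * of_int ((k + 1) * h) - of_int ((k - 1) * h) * of_int ((k - 1) * h))) \<in> BB q 3"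
    by (rule Ls_basic[OF a b])
  have e: "(of_int ((k + 1) * h) * of_int ((k + 1) * h) - of_int ((k - 1) * h) * of_int ((k - 1) * h) :: zz)
     = (of_int 2 * of_int h) * (of_int 2 * of_int h) * of_int k"
    by (simp add: algebra_simps)
  have "cc q ((of_int 2 * of_int h) * (of_int 2 * of_int h) * of_int k) (1 * 1 * of_int k)"
    by (intro cc_mult h(1) cc_refl)
  then have "cc q (sq * of_int k) (sq * ((of_int 2 * of_int h) * (of_int 2 * of_int h) * of_int k))"
    by (intro cc_mult cc_refl) (simp add: cc_sym)
  then have "mc q (Le (sq * of_int k)) (Le (sq * (of_int ((k + 1) * h) * of_int ((k + 1) * h) - of_int ((k - 1) * h) * of_int ((k - 1) * h))))"
    unfolding e by (rule mc_Le)
  then show ?thesis using B by (rule BB_cong)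
qed

lemma Ls_all: "Le (sq * of_int k) \<in> BB q 6"
proof (cases "\<not> p dvd (k + 1) \<and> \<not> p dvd (k - 1)")
  case True
  then show ?thesis using Ls_good BB_mono[of 3 6] by auto
next
  case False
  obtain h where h: "cc q (of_int 2 * of_int h) 1" using inv_ndvd[OF p_ndvd_small(2)] by blast
  have ph: "p dvd (2 * h - 1)" using cc_p[of "2*h" 1] h by simp
  let ?k = "k * h"
  have n1: "\<not> p dvd (?k + 1)"
  proof
    assume a: "p dvd (?k + 1)"
    have "p dvd (2 * (?k + 1) - k * (2 * h - 1))" using dvd_diff[OF dvd_mult[OF a, of 2] dvd_mult[OF ph, of k]] .
    then have c: "p dvd (k + 2)" by (simp add: algebra_simps)
    have "p dvd (k + 1) \<or> p dvd (k - 1)" using False by blast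
    then show False
    proof
      assume "p dvd (k + 1)"
      from dvd_diff[OF c this] show False using p_ndvd_small by simp
    next
      assume "p dvd (k - 1)"
      from dvd_diff[OF c this] show False using p_ndvd_small by simp
    qed
  qed
  have n2: "\<not> p dvd (?k - 1)"
  proof
    assume a: "p dvd (?k - 1)"
    have "p dvd (2 * (?k - 1) - k * (2 * h - 1))" using dvd_diff[OF dvd_mult[OF a, of 2] dvd_mult[OF ph, of k]] .
    then have c: "p dvd (k - 2)" by (simp add: algebra_simps)
    have "p dvd (k + 1) \<or> p dvd (k - 1)" using False by blast
    then show False
    proof
      assume "p dvd (k + 1)"
      from dvd_diff[OF this c] show False using p_ndvd_small by simp
    next
      assume "p dvd (k - 1)"
      from dvd_diff[OF this c] show False using p_ndvd_small by simp
    qed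
  qed
  have "Le (sq * of_int ?k) \<in> BB q 3" by (rule Ls_good[OF n1 n2])
  then have P: "mm (Le (sq * of_int ?k)) (Le (sq * of_int ?k)) \<in> BB q 6"
    using BB_mult[of _ q 3 _ 3] by simp
  have "cc q (sq * of_int k * (of_int 2 * of_int h)) (sq * of_int k * 1)"
    by (intro cc_mult cc_refl h)
  then have "cc q (sq * of_int k) (sq * of_int ?k + sq * of_int ?k)"
    by (simp add: cc_sym algebra_simps)
  then have "mc q (Le (sq * of_int k)) (mm (Le (sq * of_int ?k)) (Le (sq * of_int ?k)))"
    by (simp add: Le_mm mc_Le)
  then show ?thesis using P by (rule BB_cong)
qed

end

fun nrm :: "zz \<Rightarrow> int" where "nrm (ZZ a b) = a^2 + 2 * b^2"
fun cnj :: "zz \<Rightarrow> zz" where "cnj (ZZ a b) = ZZ a (- b)"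
lemma mult_cnj: "x * cnj x = of_int (nrm x)"
  by (cases x) (simp add: of_int_zz power2_eq_square)
lemma zz_decomp: "x = of_int (fst (case x of ZZ a b \<Rightarrow> (a, b))) + sq * of_int (snd (case x of ZZ a b \<Rightarrow> (a, b)))"
  by (cases x) (simp add: of_int_zz sq_def)

lemma find_t_int:
  fixes a0 a1 b0 b1 c0 c1 d0 d1 p :: int
  assumes pr: "prime p" and p2: "\<not> p dvd 2"
    and det0: "a0*d0 - 2*a1*d1 - (b0*c0 - 2*b1*c1) = 1"
    and det1: "a0*d1 + a1*d0 - (b0*c1 + b1*c0) = 0"
    and h0: "p dvd (a0^2 + 2*a1^2)" and h1: "p dvd ((a0+c0)^2 + 2*(a1+c1)^2)"
    and h2: "p dvd ((a0+2*c0)^2 + 2*(a1+2*c1)^2)"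
  shows False
proof -
  define Nc where "Nc = c0^2 + 2*c1^2"
  define T where "T = a0*c0 + 2*a1*c1"
  define x where "x = a1*c0 - a0*c1"
  have "p dvd (((a0+2*c0)^2 + 2*(a1+2*c1)^2) - 2*((a0+c0)^2 + 2*(a1+c1)^2) + (a0^2 + 2*a1^2))"
    using dvd_add[OF dvd_diff[OF h2 dvd_mult[OF h1, of 2]] h0] .
  then have "p dvd (2 * Nc)" unfolding Nc_def by (simp add: algebra_simps power2_eq_square)
  then have pNc: "p dvd Nc" using p2 prime_dvd_mult_iff[OF pr] by blast
  have "p dvd (((a0+c0)^2 + 2*(a1+c1)^2) - (a0^2 + 2*a1^2) - Nc)"
    using dvd_diff[OF dvd_diff[OF h1 h0] pNc] .
  then have "p dvd (2 * T)" unfolding Nc_def T_def by (simp add: algebra_simps power2_eq_square)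
  then have pT: "p dvd T" using p2 prime_dvd_mult_iff[OF pr] by blast
  have "T * T + 2 * (x * x) = (a0^2 + 2*a1^2) * Nc"
    unfolding T_def x_def Nc_def by (simp add: algebra_simps power2_eq_square)
  then have "2 * (x * x) = (a0^2 + 2*a1^2) * Nc - T * T" by simp
  moreover have "p dvd ((a0^2 + 2*a1^2) * Nc - T * T)" using dvd_diff[OF dvd_mult[OF pNc] dvd_mult[OF pT]] .
  ultimately have "p dvd (2 * (x * x))" by simp
  then have px: "p dvd x" using p2 prime_dvd_mult_iff[OF pr] by blast
  have "c0 = c0 * (a0*d0 - 2*a1*d1 - (b0*c0 - 2*b1*c1)) + 2*c1*(a0*d1 + a1*d0 - (b0*c1 + b1*c0))"
    using det0 det1 by simp
  also have "\<dots> = T*d0 - 2*x*d1 - Nc*b0" unfolding T_def x_def Nc_def by (simp add: algebra_simps power2_eq_square)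
  finally have e0: "c0 = T*d0 - 2*x*d1 - Nc*b0" .
  have "c1 = c1 * (a0*d0 - 2*a1*d1 - (b0*c0 - 2*b1*c1)) - c0*(a0*d1 + a1*d0 - (b0*c1 + b1*c0))"
    using det0 det1 by simp
  also have "\<dots> = - (T*d1 + x*d0 - Nc*b1)" unfolding T_def x_def Nc_def by (simp add: algebra_simps power2_eq_square)
  finally have e1: "c1 = - (T*d1 + x*d0 - Nc*b1)" .
  have pc0: "p dvd c0" unfolding e0
    using dvd_diff[OF dvd_diff[OF dvd_mult2[OF pT] dvd_mult2[OF dvd_mult[OF px]]] dvd_mult2[OF pNc]] by (simp add: mult.assoc)
  have pc1: "p dvd c1" unfolding e1
    using dvd_diff[OF dvd_add[OF dvd_mult2[OF pT, of d1] dvd_mult2[OF px, of d0]] dvd_mult2[OF pNc, of b1]]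
    by (simp only: dvd_minus_iff)
  define u where "u = b0*c0 - 2*b1*c1"
  define v where "v = b0*c1 + b1*c0"
  have pu: "p dvd u" unfolding u_def using dvd_diff[OF dvd_mult[OF pc0, of b0] dvd_mult[OF pc1, of "2*b1"]] by (simp add: mult.assoc)
  have pv: "p dvd v" unfolding v_def using dvd_add[OF dvd_mult[OF pc1, of b0] dvd_mult[OF pc0, of b1]] by (simp add: mult.commute)
  have "1 = (a0^2 + 2*a1^2) * (d0^2 + 2*d1^2) - u * (2 + u) - 2 * (v * v)"
  proof -
    have "(a0^2 + 2*a1^2) * (d0^2 + 2*d1^2) = (a0*d0 - 2*a1*d1)^2 + 2*(a0*d1 + a1*d0)^2"
      by (simp add: algebra_simps power2_eq_square)
    moreover have "a0*d0 - 2*a1*d1 = 1 + u" using det0 unfolding u_def by simp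
    moreover have "a0*d1 + a1*d0 = v" using det1 unfolding v_def by simp
    ultimately have "(a0^2 + 2*a1^2) * (d0^2 + 2*d1^2) = (1 + u)^2 + 2 * v^2" by simp
    then show ?thesis by (simp add: power2_eq_square algebra_simps)
  qed
  moreover have "p dvd ((a0^2 + 2*a1^2) * (d0^2 + 2*d1^2) - u * (2 + u) - 2 * (v * v))"
    using dvd_diff[OF dvd_diff[OF dvd_mult2[OF h0, of "d0^2 + 2*d1^2"] dvd_mult2[OF pu, of "2+u"]] dvd_mult[OF dvd_mult2[OF pv, of v], of 2]] by simp
  ultimately have "p dvd 1" by simp
  then show False using prime_gt_1_int[OF pr] zdvd_imp_le[of p 1] by simp
qed

context pset begin

lemma find_t:
  assumes det: "a * d - b * c = (1::zz)"
  shows "\<exists>t\<in>{0,1,2::int}. \<not> p dvd nrm (a + of_int t * c)"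
proof (rule ccontr)
  assume H: "\<not> (\<exists>t\<in>{0,1,2::int}. \<not> p dvd nrm (a + of_int t * c))"
  obtain a0 a1 where a: "a = ZZ a0 a1" by (cases a)
  obtain b0 b1 where b: "b = ZZ b0 b1" by (cases b)
  obtain c0 c1 where c: "c = ZZ c0 c1" by (cases c)
  obtain d0 d1 where d: "d = ZZ d0 d1" by (cases d)
  from det have det0: "a0*d0 - 2*a1*d1 - (b0*c0 - 2*b1*c1) = 1"
    and det1: "a0*d1 + a1*d0 - (b0*c1 + b1*c0) = 0"
    unfolding a b c d by (simp_all add: one_zz_def)
  from H have "p dvd nrm (a + of_int 0 * c)" "p dvd nrm (a + of_int 1 * c)" "p dvd nrm (a + of_int 2 * c)"
    by auto
  then have h0: "p dvd (a0^2 + 2*a1^2)" and h1: "p dvd ((a0+c0)^2 + 2*(a1+c1)^2)"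
    and h2: "p dvd ((a0+2*c0)^2 + 2*(a1+2*c1)^2)"
    unfolding a c by (simp_all add: of_int_zz zero_zz_def one_zz_def)
  show False by (rule find_t_int[OF pr p_ndvd_small(2) det0 det1 h0 h1 h2])
qed

lemma U_BB: "Ue (of_int t) \<in> BB q 1" by (rule G1_BB[OF U_G1[OF q_pos cop2]])
lemma L_BB: "Le (of_int t) \<in> BB q 1" by (rule G1_BB[OF L_G1[OF q_pos cop2]])

lemma Le_all: "Le x \<in> BB q 7"
proof -
  obtain x0 x1 where x: "x = ZZ x0 x1" by (cases x)
  have "x = of_int x0 + sq * of_int x1" unfolding x by (simp add: of_int_zz sq_def)
  then have "Le x = mm (Le (of_int x0)) (Le (sq * of_int x1))" by (simp add: Le_mm)
  moreover have "mm (Le (of_int x0)) (Le (sq * of_int x1)) \<in> BB q (1 + 6)"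
    by (rule BB_mult[OF L_BB Ls_all])
  ultimately show ?thesis by simp
qed

definition Wm :: mz where "Wm = wmat 1 1"

lemma Wm_eq: "Wm = MZ 0 1 (-1) 0" by (simp add: Wm_def wmat_def Ue_def Le_def)
lemma Wm_BB: "Wm \<in> BB q 1"
proof -
  have "Ue 1 \<in> G1 q" using U_G1[OF q_pos cop2, of 1] by simp
  moreover have "Le (- 1) \<in> G1 q" using L_G1[OF q_pos cop2, of "-1"] by simp
  ultimately show ?thesis unfolding Wm_def wmat_def by (intro G1_BB G1_mm)
qed
lemma W1_BB: "W1 \<in> BB q 1" by (rule G1_BB[OF W1_G1[OF q_pos cop2]])

lemma Ue_all: "Ue x \<in> BB q 9"
proof -
  obtain x0 x1 where x: "x = ZZ x0 x1" by (cases x)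
  have "x = of_int x0 + sq * of_int x1" unfolding x by (simp add: of_int_zz sq_def)
  then have e1: "Ue x = mm (Ue (of_int x0)) (Ue (sq * of_int x1))" by (simp add: Ue_mm)
  have e2: "Ue (sq * of_int x1) = mm (mm Wm (Le (sq * of_int (- x1)))) W1"
    by (simp add: Wm_eq W1_eq Ue_def Le_def)
  have "mm (mm Wm (Le (sq * of_int (- x1)))) W1 \<in> BB q (1 + 6 + 1)"
    by (intro BB_mult Wm_BB Ls_all W1_BB)
  then have "Ue x \<in> BB q (1 + (1 + 6 + 1))" unfolding e1 e2 using BB_mult[OF U_BB] by blast
  then show ?thesis by simp
qed

lemma unit_inv:
  assumes "\<not> p dvd nrm u" shows "\<exists>ui. cc q (u * ui) 1"
proof -
  obtain n where "cc q (of_int (nrm u) * of_int n) 1" using inv_exists[OF ndvd_cop[OF assms]] by blast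
  then have "cc q (u * (cnj u * of_int n)) 1" by (simp add: mult.assoc[symmetric] mult_cnj)
  then show ?thesis by blast
qed

lemma decomp:
  assumes det: "mdet X = 1" shows "X \<in> BB q 54"
proof -
  obtain a b c d where X: "X = MZ a b c d" by (cases X)
  with det have det': "a * d - b * c = 1" by simp
  obtain t where t: "t \<in> {0,1,2::int}" "\<not> p dvd nrm (a + of_int t * c)" using find_t[OF det'] by blast
  define a' where "a' = a + of_int t * c"
  define b' where "b' = b + of_int t * d"
  obtain ai where ai: "cc q (a' * ai) 1" using unit_inv t(2) unfolding a'_def by blast
  have det2: "a' * d - b' * c = 1" using det' unfolding a'_def b'_def by (simp add: algebra_simps)
  have eX: "X = mm (Ue (of_int (- t))) (MZ a' b' c d)"
    unfolding X a'_def b'_def Ue_def by (simp add: algebra_simps)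
  have prod: "mm (mm (Le (c * ai)) (Dg a' ai)) (Ue (ai * b')) =
      MZ a' (a' * (ai * b')) (c * ai * a') (c * ai * a' * (ai * b') + ai)"
    by (simp add: Le_def Dg_def Ue_def algebra_simps)
  have m1: "cc q b' (a' * (ai * b'))"
  proof -
    have "cc q ((a' * ai) * b') (1 * b')" by (intro cc_mult ai cc_refl)
    then show ?thesis by (simp add: cc_sym mult.assoc)
  qed
  have m2: "cc q c (c * ai * a')"
  proof -
    have "cc q (c * (a' * ai)) (c * 1)" by (intro cc_mult ai cc_refl)
    then show ?thesis by (simp add: cc_sym algebra_simps)
  qed
  have m3: "cc q d (c * ai * a' * (ai * b') + ai)"
  proof -
    have "cc q (ai * (c * b') * (a' * ai) + ai) (ai * (c * b') * 1 + ai)"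
      by (intro cc_add cc_mult ai cc_refl)
    moreover have "ai * (c * b') * 1 + ai = ai * a' * d"
    proof -
      have "a' * d = 1 + b' * c" using det2 by (simp add: algebra_simps)
      then have "ai * (a' * d) = ai * (1 + b' * c)" by simp
      then show ?thesis by (simp add: algebra_simps)
    qed
    moreover have "cc q (d * (a' * ai)) (d * 1)" by (intro cc_mult ai cc_refl)
    ultimately have "cc q (ai * (c * b') * (a' * ai) + ai) d"
      by (metis cc_trans mult.commute mult.left_commute mult_1_right)
    moreover have "ai * (c * b') * (a' * ai) + ai = c * ai * a' * (ai * b') + ai" by (simp add: algebra_simps)
    ultimately show ?thesis by (simp add: cc_sym)
  qed
  have "mc q (MZ a' b' c d) (mm (mm (Le (c * ai)) (Dg a' ai)) (Ue (ai * b')))"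
    unfolding prod using m1 m2 m3 by simp
  moreover have "mc q (mm (mm (Le (c * ai)) (Dg a' ai)) (Ue (ai * b')))
                      (mm (mm (Le (c * ai)) (mm (wmat a' ai) W1)) (Ue (ai * b')))"
    by (intro mc_mm mc_refl diag_mc[OF ai])
  ultimately have mX: "mc q X (mm (Ue (of_int (- t))) (mm (mm (Le (c * ai)) (mm (wmat a' ai) W1)) (Ue (ai * b'))))"
    unfolding eX by (intro mc_mm mc_refl) (rule mc_trans)
  have "wmat a' ai \<in> BB q (9 + 7 + 9)" unfolding wmat_def by (intro BB_mult Ue_all Le_all)
  then have "mm (Ue (of_int (- t))) (mm (mm (Le (c * ai)) (mm (wmat a' ai) W1)) (Ue (ai * b')))
      \<in> BB q (1 + ((7 + ((9 + 7 + 9) + 1)) + 9))"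
    by (intro BB_mult U_BB Le_all Ue_all W1_BB)
  then have "mm (Ue (of_int (- t))) (mm (mm (Le (c * ai)) (mm (wmat a' ai) W1)) (Ue (ai * b'))) \<in> BB q 54"
    by (rule BB_mono[rotated]) simp
  then show ?thesis using mX by (rule BB_cong[rotated])
qed

end

lemma Gamma_det: "G \<in> Gamma \<Longrightarrow> mdet (phi G) = 1"
  unfolding Gamma_def
  by (erule gen_det)
     (auto simp: M1_def M2_def M3_def M4_def M5_def M6_def M7_def toz_def one_zz_def)

theorem lemma2p3:
  fixes p :: int and m :: nat
  assumes "prime p" and "p \<ge> 5" and "m \<ge> 1"
  shows "A 54 (p ^ m) = Gamma_quot (p ^ m)"
proof -
  interpret pset p "p ^ m" m using assms by unfold_locales auto
  show ?thesis by (rule final_step) (rule decomp[OF Gamma_det])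
qed

end
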